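(* Let $\delta>0$, $\rho>0$ and $\eta_c>0$, and let $g(A,\eta)=\delta(\eta-\eta_c)$ and $h(A,\eta)=\rho\left(112.88+56.91\eta-24.31\eta^2-11.05\eta^3-\frac{A}{1.5}\right)$. Consider the piecewise vector field $$\dot A=g(A,\eta),\qquad \dot\eta=\begin{cases} -|h| & \eta>1,\\ \tfrac{h-|h|}{2} & \eta=1,\\ h & 0<\eta<1,\\ \tfrac{h+|h|}{2} & \eta=0,\\ |h| & \eta<0. \end{cases}$$ Then any (forward-unique) Filippov solution $(A(t),\eta(t))$ of this system that reaches the boundary $\eta=0$, say $\eta(t_0)=0$, leaves it in finite time: there exists $t_1>t_0$ with $\eta(t_1)>0$.
   Context: Filippov solutions: for a locally essentially bounded vector field $F$ on $\mathbb{R}^2$, let $\mathcal{K}[F](z)=\bigcap_{\delta'>0}\bigcap_{\mu(N)=0}\overline{\mathrm{co}}\,F(B_{\delta'}(z)\setminus N)$; a Filippov solution is an absolutely continuous curve $z(t)$ with $\dot z(t)\in\mathcal{K}[F](z(t))$ for almost every $t$. Such solutions exist and are unique in forward time for this system. *)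

theory Defs
  imports "HOL-Analysis.Analysis"
begin

definition abs_cont_on :: "real set \<Rightarrow> (real \<Rightarrow> 'a::real_normed_vector) \<Rightarrow> bool" where
  "abs_cont_on S f \<longleftrightarrow>
     (\<forall>e>0. \<exists>d>0. \<forall>(n::nat) (a::nat \<Rightarrow> real) b.
        (\<forall>i<n. a i \<le> b i \<and> {a i..b i} \<subseteq> S) \<and>
        (\<forall>i<n. \<forall>j<n. i \<noteq> j \<longrightarrow> b i \<le> a j \<or> b j \<le> a i) \<and>
        (\<Sum>i<n. b i - a i) < d
        \<longrightarrow> (\<Sum>i<n. norm (f (b i) - f (a i))) < e)"

definition filippov_set :: "('a::euclidean_space \<Rightarrow> 'a) \<Rightarrow> 'a \<Rightarrow> 'a set" where
  "filippov_set F z =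
     (\<Inter>d\<in>{d::real. d > 0}. \<Inter>N\<in>{N. negligible N}. closure (convex hull (F ` (ball z d - N))))"

definition filippov_solution :: "('a::euclidean_space \<Rightarrow> 'a) \<Rightarrow> real set \<Rightarrow> (real \<Rightarrow> 'a) \<Rightarrow> bool" where
  "filippov_solution F I z \<longleftrightarrow>
     (\<forall>a b. {a..b} \<subseteq> I \<longrightarrow> abs_cont_on {a..b} z) \<and>
     (AE t in lebesgue. t \<in> I \<longrightarrow>
        (\<exists>v. (z has_vector_derivative v) (at t) \<and> v \<in> filippov_set F (z t)))"

definition g_fun :: "real \<Rightarrow> real \<Rightarrow> real \<Rightarrow> real \<Rightarrow> real" where
  "g_fun \<delta> \<eta>c A \<eta> = \<delta> * (\<eta> - \<eta>c)"

definition h_fun :: "real \<Rightarrow> real \<Rightarrow> real \<Rightarrow> real" where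
  "h_fun \<rho> A \<eta> = \<rho> * (112.88 + 56.91 * \<eta> - 24.31 * \<eta>^2 - 11.05 * \<eta>^3 - A / 1.5)"

definition eta_dot :: "real \<Rightarrow> real \<Rightarrow> real \<Rightarrow> real" where
  "eta_dot \<rho> A \<eta> =
     (let h = h_fun \<rho> A \<eta> in
      if \<eta> > 1 then - \<bar>h\<bar>
      else if \<eta> = 1 then (h - \<bar>h\<bar>) / 2
      else if 0 < \<eta> then h
      else if \<eta> = 0 then (h + \<bar>h\<bar>) / 2
      else \<bar>h\<bar>)"

definition field :: "real \<Rightarrow> real \<Rightarrow> real \<Rightarrow> real \<times> real \<Rightarrow> real \<times> real" where
  "field \<delta> \<rho> \<eta>c z = (g_fun \<delta> \<eta>c (fst z) (snd z), eta_dot \<rho> (fst z) (snd z))"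

end

theory Submission
  imports Defs
begin


lemma ac_family:
  fixes g :: "real \<Rightarrow> real"
  assumes ac: "abs_cont_on {a..b} g" and e: "e > 0"
  obtains d where "d > 0"
    "\<And>Q::(real \<times> real set) set. finite Q \<Longrightarrow>
       (\<And>x K. (x,K) \<in> Q \<Longrightarrow> Inf K < Sup K \<and> K = {Inf K..Sup K} \<and> K \<subseteq> {a..b}) \<Longrightarrow>
       (\<And>x1 K1 x2 K2. (x1,K1) \<in> Q \<Longrightarrow> (x2,K2) \<in> Q \<Longrightarrow> (x1,K1) \<noteq> (x2,K2) \<Longrightarrow> interior K1 \<inter> interior K2 = {}) \<Longrightarrow>
       (\<Sum>(x,K)\<in>Q. Henstock_Kurzweil_Integration.content K) < d \<Longrightarrow> (\<Sum>(x,K)\<in>Q. \<bar>g (Sup K) - g (Inf K)\<bar>) < e"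
proof -
  obtain d where d: "d > 0" and dd0: "\<forall>(n::nat) (\<alpha>::nat \<Rightarrow> real) \<beta>.
        (\<forall>i<n. \<alpha> i \<le> \<beta> i \<and> {\<alpha> i..\<beta> i} \<subseteq> {a..b}) \<and>
        (\<forall>i<n. \<forall>j<n. i \<noteq> j \<longrightarrow> \<beta> i \<le> \<alpha> j \<or> \<beta> j \<le> \<alpha> i) \<and>
        (\<Sum>i<n. \<beta> i - \<alpha> i) < d \<longrightarrow> (\<Sum>i<n. norm (g (\<beta> i) - g (\<alpha> i))) < e"
    using ac e unfolding abs_cont_on_def by blast
  note dd = dd0[rule_format, OF conjI, OF _ conjI]
  show ?thesis
  proof (rule that[OF d])
    fix Q :: "(real \<times> real set) set"
    assume fin: "finite Q"
      and iv: "\<And>x K. (x,K) \<in> Q \<Longrightarrow> Inf K < Sup K \<and> K = {Inf K..Sup K} \<and> K \<subseteq> {a..b}"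
      and dj: "\<And>x1 K1 x2 K2. (x1,K1) \<in> Q \<Longrightarrow> (x2,K2) \<in> Q \<Longrightarrow> (x1,K1) \<noteq> (x2,K2) \<Longrightarrow> interior K1 \<inter> interior K2 = {}"
      and sm: "(\<Sum>(x,K)\<in>Q. Henstock_Kurzweil_Integration.content K) < d"
    obtain h where h: "bij_betw h {0..<card Q} Q" using ex_bij_betw_nat_finite[OF fin] by blast
    define n where "n = card Q"
    define \<alpha> where "\<alpha> i = Inf (snd (h i))" for i
    define \<beta> where "\<beta> i = Sup (snd (h i))" for i
    have hQ: "i < n \<Longrightarrow> h i \<in> Q" for i using h unfolding n_def bij_betw_def by auto
    have hinj: "i < n \<Longrightarrow> j < n \<Longrightarrow> i \<noteq> j \<Longrightarrow> h i \<noteq> h j" for i j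
      using h unfolding n_def bij_betw_def inj_on_def by auto
    have ivi: "i < n \<Longrightarrow> \<alpha> i < \<beta> i \<and> snd (h i) = {\<alpha> i..\<beta> i} \<and> snd (h i) \<subseteq> {a..b}" for i
      using iv[of "fst (h i)" "snd (h i)"] hQ[of i] unfolding \<alpha>_def \<beta>_def by auto
    have 1: "\<forall>i<n. \<alpha> i \<le> \<beta> i \<and> {\<alpha> i..\<beta> i} \<subseteq> {a..b}"
      proof (intro allI impI)
      fix i assume "i < n" from ivi[OF this] show "\<alpha> i \<le> \<beta> i \<and> {\<alpha> i..\<beta> i} \<subseteq> {a..b}" by auto
    qed
    have 2: "\<forall>i<n. \<forall>j<n. i \<noteq> j \<longrightarrow> \<beta> i \<le> \<alpha> j \<or> \<beta> j \<le> \<alpha> i"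
    proof (intro allI impI)
      fix i j assume ij: "i < n" "j < n" "i \<noteq> j"
      have "interior (snd (h i)) \<inter> interior (snd (h j)) = {}"
        using dj[of "fst (h i)" "snd (h i)" "fst (h j)" "snd (h j)"] hQ ij hinj by auto
      then have "{\<alpha> i<..<\<beta> i} \<inter> {\<alpha> j<..<\<beta> j} = {}" using ivi[OF ij(1)] ivi[OF ij(2)] by simp
      moreover have "\<alpha> i < \<beta> i" "\<alpha> j < \<beta> j" using ivi ij by auto
      ultimately show "\<beta> i \<le> \<alpha> j \<or> \<beta> j \<le> \<alpha> i"
      proof -
        assume A: "{\<alpha> i<..<\<beta> i} \<inter> {\<alpha> j<..<\<beta> j} = {}" "\<alpha> i < \<beta> i" "\<alpha> j < \<beta> j"
        show ?thesis
        proof (rule ccontr)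
          assume "\<not> ?thesis"
          then have "(max (\<alpha> i) (\<alpha> j) + min (\<beta> i) (\<beta> j)) / 2 \<in> {\<alpha> i<..<\<beta> i} \<inter> {\<alpha> j<..<\<beta> j}"
            using A by (auto simp: max_def min_def split: if_splits)
          then show False using A by blast
        qed
      qed
    qed
    have eqc: "(\<Sum>i<n. \<beta> i - \<alpha> i) = (\<Sum>(x,K)\<in>Q. Henstock_Kurzweil_Integration.content K)"
    proof -
      have "(\<Sum>i<n. \<beta> i - \<alpha> i) = (\<Sum>i<n. (\<lambda>(x,K). Henstock_Kurzweil_Integration.content K) (h i))"
      proof (rule sum.cong)
        fix i assume "i \<in> {..<n}"
        then have "i < n" by simp
        from ivi[OF this] show "\<beta> i - \<alpha> i = (\<lambda>(x,K). Henstock_Kurzweil_Integration.content K) (h i)"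
          by (auto simp: split_beta)
      qed simp
      also have "\<dots> = (\<Sum>(x,K)\<in>Q. Henstock_Kurzweil_Integration.content K)"
        using sum.reindex_bij_betw[OF h, of "\<lambda>(x,K). Henstock_Kurzweil_Integration.content K"] by (simp add: n_def lessThan_atLeast0)
      finally show ?thesis .
    qed
    have eqg: "(\<Sum>i<n. norm (g (\<beta> i) - g (\<alpha> i))) = (\<Sum>(x,K)\<in>Q. \<bar>g (Sup K) - g (Inf K)\<bar>)"
    proof -
      have "(\<Sum>i<n. norm (g (\<beta> i) - g (\<alpha> i))) = (\<Sum>i<n. (\<lambda>(x,K). \<bar>g (Sup K) - g (Inf K)\<bar>) (h i))"
        by (rule sum.cong) (auto simp: split_beta \<alpha>_def \<beta>_def)
      also have "\<dots> = (\<Sum>(x,K)\<in>Q. \<bar>g (Sup K) - g (Inf K)\<bar>)"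
        using sum.reindex_bij_betw[OF h, of "\<lambda>(x,K). \<bar>g (Sup K) - g (Inf K)\<bar>"] by (simp add: n_def lessThan_atLeast0)
      finally show ?thesis .
    qed
    show "(\<Sum>(x,K)\<in>Q. \<bar>g (Sup K) - g (Inf K)\<bar>) < e"
      using dd[OF 1 2] sm eqc eqg by simp
  qed
qed



lemma deriv_local:
  fixes g :: "real \<Rightarrow> real"
  assumes "(g has_real_derivative v) (at t)" "v \<ge> 0" "e > 0"
  shows "\<exists>r>0. \<forall>u w. u \<le> t \<and> t \<le> w \<and> \<bar>u - t\<bar> < r \<and> \<bar>w - t\<bar> < r \<longrightarrow> g u - g w \<le> e * (w - u)"
proof -
  from assms(1) have "(g has_derivative (*) v) (at t)"
    by (simp add: has_field_derivative_def)
  then obtain r where r: "r > 0" and rr: "\<And>y. norm (y - t) < r \<Longrightarrow> norm (g y - g t - v * (y - t)) \<le> e * norm (y - t)"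
    using assms(3) unfolding has_derivative_at_alt by blast
  show ?thesis
  proof (intro exI[of _ r] conjI allI impI r)
    fix u w assume uw: "u \<le> t \<and> t \<le> w \<and> \<bar>u - t\<bar> < r \<and> \<bar>w - t\<bar> < r"
    have 1: "\<bar>g u - g t - v * (u - t)\<bar> \<le> e * \<bar>u - t\<bar>" using rr[of u] uw unfolding real_norm_def by blast
    have 2: "\<bar>g w - g t - v * (w - t)\<bar> \<le> e * \<bar>w - t\<bar>" using rr[of w] uw unfolding real_norm_def by blast
    have 3: "v * (t - u) \<ge> 0" "v * (w - t) \<ge> 0" using uw assms(2) by auto
    have 4: "\<bar>u - t\<bar> = t - u" "\<bar>w - t\<bar> = w - t" using uw by auto
    have "e * (t - u) + e * (w - t) = e * (w - u)" by (simp add: algebra_simps)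
    then show "g u - g w \<le> e * (w - u)" using 1 2 3 4 by (simp add: algebra_simps abs_le_iff)
  qed
qed



lemma tagged_interval:
  fixes p :: "(real \<times> real set) set"
  assumes p: "p tagged_division_of {a..b}" and xK: "(x,K) \<in> p"
  shows "Inf K \<le> x \<and> x \<le> Sup K \<and> K = {Inf K..Sup K} \<and> K \<subseteq> {a..b} \<and> x \<in> K"
proof -
  obtain u w where K: "K = cbox u w" using tagged_division_ofD(4)[OF p xK] by blast
  have xin: "x \<in> K" using tagged_division_ofD(2)[OF p xK] .
  have sub: "K \<subseteq> {a..b}" using tagged_division_ofD(3)[OF p xK] .
  from xin K have uw: "u \<le> w" "u \<le> x" "x \<le> w" by auto
  have "Inf K = u" "Sup K = w" using K uw by auto
  then show ?thesis using K uw xin sub by auto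
qed

lemma ac_mono:
  fixes g :: "real \<Rightarrow> real"
  assumes ab: "a \<le> b" and ac: "abs_cont_on {a..b} g" and E: "negligible E"
    and der: "\<And>t. t \<in> {a..b} \<Longrightarrow> t \<notin> E \<Longrightarrow> \<exists>v\<ge>0. (g has_real_derivative v) (at t)"
  shows "g a \<le> g b"
proof -
  have "g a \<le> g b + e" if e: "e > 0" for e
  proof (rule ac_family[OF ac half_gt_zero[OF e]])
    fix d assume d: "d > 0" and dfam: "\<And>Q::(real \<times> real set) set. finite Q \<Longrightarrow>
       (\<And>x K. (x,K) \<in> Q \<Longrightarrow> Inf K < Sup K \<and> K = {Inf K..Sup K} \<and> K \<subseteq> {a..b}) \<Longrightarrow>
       (\<And>x1 K1 x2 K2. (x1,K1) \<in> Q \<Longrightarrow> (x2,K2) \<in> Q \<Longrightarrow> (x1,K1) \<noteq> (x2,K2) \<Longrightarrow> interior K1 \<inter> interior K2 = {}) \<Longrightarrow>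
       (\<Sum>(x,K)\<in>Q. Henstock_Kurzweil_Integration.content K) < d \<Longrightarrow> (\<Sum>(x,K)\<in>Q. \<bar>g (Sup K) - g (Inf K)\<bar>) < e/2"
    have int0: "((indicator E :: real \<Rightarrow> real) has_integral 0) (cbox a b)"
      by (rule has_integral_negligible_cbox[OF E]) (simp add: indicator_def)
    from int0[unfolded has_integral, rule_format, OF d]
    obtain \<gamma>1 where g1: "gauge \<gamma>1" and g1d0: "\<forall>\<D>. \<D> tagged_division_of cbox a b \<and> \<gamma>1 fine \<D> \<longrightarrow>
        norm ((\<Sum>(x,k)\<in>\<D>. Henstock_Kurzweil_Integration.content k *\<^sub>R (indicator E x :: real)) - 0) < d"
      by blast
    have g1d: "\<And>\<D>. \<D> tagged_division_of cbox a b \<Longrightarrow> \<gamma>1 fine \<D> \<Longrightarrow>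
        norm ((\<Sum>(x,k)\<in>\<D>. Henstock_Kurzweil_Integration.content k *\<^sub>R (indicator E x :: real)) - 0) < d"
      using g1d0 by blast
    define e' where "e' = e / (2*(b - a + 1))"
    have e'0: "e' > 0" using e ab by (simp add: e'_def)
    have e'b: "e' * (b - a) \<le> e / 2"
    proof -
      have "e' * (b - a) \<le> e' * (b - a + 1)" using e'0 by simp
      also have "\<dots> = e / 2"
      proof -
        have pos: "b - a + 1 > 0" using ab by simp
        then show ?thesis by (simp add: e'_def field_simps)
      qed
      finally show ?thesis .
    qed
    have "\<forall>t. \<exists>r>0. t \<in> {a..b} \<and> t \<notin> E \<longrightarrow>
      (\<forall>u w. u \<le> t \<and> t \<le> w \<and> \<bar>u - t\<bar> < r \<and> \<bar>w - t\<bar> < r \<longrightarrow> g u - g w \<le> e' * (w - u))"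
    proof
      fix t
      show "\<exists>r>0. t \<in> {a..b} \<and> t \<notin> E \<longrightarrow>
        (\<forall>u w. u \<le> t \<and> t \<le> w \<and> \<bar>u - t\<bar> < r \<and> \<bar>w - t\<bar> < r \<longrightarrow> g u - g w \<le> e' * (w - u))"
      proof (cases "t \<in> {a..b} \<and> t \<notin> E")
        case True
        then obtain v where "v \<ge> 0" "(g has_real_derivative v) (at t)" using der by blast
        from deriv_local[OF this(2,1) e'0] show ?thesis by blast
      next
        case False
        then show ?thesis by (intro exI[of _ 1]) auto
      qed
    qed
    then obtain R where R: "\<And>t. R t > 0"
      and RR: "\<And>t u w. t \<in> {a..b} \<Longrightarrow> t \<notin> E \<Longrightarrow> u \<le> t \<Longrightarrow> t \<le> w \<Longrightarrow> \<bar>u - t\<bar> < R t \<Longrightarrow> \<bar>w - t\<bar> < R t \<Longrightarrow> g u - g w \<le> e' * (w - u)"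
      by metis
    have gg: "gauge (\<lambda>t. ball t (R t) \<inter> \<gamma>1 t)"
      using gauge_ball_dependent[of R] R g1 by auto
    obtain p where p: "p tagged_division_of {a..b}" and pf: "(\<lambda>t. ball t (R t) \<inter> \<gamma>1 t) fine p"
      using fine_division_exists_real[OF gg] by blast
    have fin: "finite p" using p by blast
    have pf1: "\<gamma>1 fine p" using pf unfolding fine_def by blast
    have pfR: "\<And>x K. (x,K) \<in> p \<Longrightarrow> K \<subseteq> ball x (R x)" using pf unfolding fine_def by blast
    have sumeq: "(\<Sum>(x,K)\<in>p. g (Sup K) - g (Inf K)) = g b - g a"
      by (rule additive_tagged_division_1[OF ab p])
    define P1 where "P1 = {(x,K)\<in>p. x \<in> E \<and> Inf K < Sup K}"
    have P1p: "P1 \<subseteq> p" unfolding P1_def by auto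
    have finP1: "finite P1" using P1p fin finite_subset by blast
    have split: "(\<Sum>(x,K)\<in>p. g (Sup K) - g (Inf K)) =
        (\<Sum>(x,K)\<in>p - P1. g (Sup K) - g (Inf K)) + (\<Sum>(x,K)\<in>P1. g (Sup K) - g (Inf K))"
      using sum.subset_diff[OF P1p fin] by simp
    have P2: "(\<Sum>(x,K)\<in>p - P1. g (Sup K) - g (Inf K)) \<ge> - (e / 2)"
    proof -
      have "(\<Sum>(x,K)\<in>p - P1. g (Sup K) - g (Inf K)) \<ge> (\<Sum>(x,K)\<in>p - P1. - e' * Henstock_Kurzweil_Integration.content K)"
      proof (rule sum_mono)
        fix xK assume xK: "xK \<in> p - P1"
        obtain x K where xKe: "xK = (x,K)" by fastforce
        have inp: "(x,K) \<in> p" and nP1: "(x,K) \<notin> P1" using xK xKe by auto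
        note ti = tagged_interval[OF p inp]
        have cK: "Henstock_Kurzweil_Integration.content K = Sup K - Inf K" 
        proof -
          have iK: "K = {Inf K..Sup K}" "Inf K \<le> Sup K" using ti by auto
          show ?thesis using arg_cong[OF iK(1), of Henstock_Kurzweil_Integration.content] content_real[OF iK(2)] by linarith
        qed
        show "(\<lambda>(x,K). - e' * Henstock_Kurzweil_Integration.content K) xK \<le> (\<lambda>(x,K). g (Sup K) - g (Inf K)) xK"
        proof (cases "x \<in> E")
          case True
          then have "\<not> Inf K < Sup K" using nP1 inp unfolding P1_def by auto
          then have "Inf K = Sup K" using ti by linarith
          then show ?thesis using xKe cK by simp
        next
          case False
          have mem: "\<And>(u::real) w S. S = {u..w} \<Longrightarrow> u \<le> w \<Longrightarrow> u \<in> S \<and> w \<in> S" by auto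
          have Keq: "K = {Inf K..Sup K}" and iK: "Inf K \<le> Sup K" using ti by (blast, linarith)
          have "Inf K \<in> ball x (R x)" "Sup K \<in> ball x (R x)" using pfR[OF inp] mem[OF Keq iK] by auto
          then have "\<bar>Inf K - x\<bar> < R x" "\<bar>Sup K - x\<bar> < R x" by (auto simp: dist_real_def abs_minus_commute)
          moreover have "x \<in> {a..b}" using ti by auto
          ultimately have "g (Inf K) - g (Sup K) \<le> e' * (Sup K - Inf K)"
            using RR[of x "Inf K" "Sup K"] False ti by blast
          then show ?thesis by (simp add: xKe cK algebra_simps)
        qed
      qed
      moreover have "(\<Sum>(x,K)\<in>p - P1. - e' * Henstock_Kurzweil_Integration.content K) = - e' * (\<Sum>(x,K)\<in>p - P1. Henstock_Kurzweil_Integration.content K)"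
        by (simp add: sum_distrib_left split_beta)
      moreover have "(\<Sum>(x,K)\<in>p - P1. Henstock_Kurzweil_Integration.content K) \<le> (\<Sum>(x,K)\<in>p. Henstock_Kurzweil_Integration.content K)"
        by (rule sum_mono2[OF fin]) (auto simp: split_beta)
      moreover have "(\<Sum>(x,K)\<in>p. Henstock_Kurzweil_Integration.content K) = b - a"
        using additive_content_tagged_division[of p a b] p ab by simp
      ultimately have A: "(\<Sum>(x,K)\<in>p - P1. g (Sup K) - g (Inf K)) \<ge> - e' * (\<Sum>(x,K)\<in>p - P1. Henstock_Kurzweil_Integration.content K)"
        and B: "(\<Sum>(x,K)\<in>p - P1. Henstock_Kurzweil_Integration.content K) \<le> b - a" by simp_all
      have "e' * (\<Sum>(x,K)\<in>p - P1. Henstock_Kurzweil_Integration.content K) \<le> e' * (b - a)"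
        using B e'0 by (intro mult_left_mono) auto
      then show ?thesis using A e'b by linarith
    qed
    have P1b: "(\<Sum>(x,K)\<in>P1. g (Sup K) - g (Inf K)) > - (e / 2)"
    proof -
      have c1: "(\<Sum>(x,K)\<in>P1. Henstock_Kurzweil_Integration.content K) < d"
      proof -
        have "(\<Sum>(x,K)\<in>P1. Henstock_Kurzweil_Integration.content K) = (\<Sum>(x,K)\<in>P1. Henstock_Kurzweil_Integration.content K *\<^sub>R (indicator E x :: real))"
          by (rule sum.cong) (auto simp: P1_def)
        also have "\<dots> \<le> (\<Sum>(x,K)\<in>p. Henstock_Kurzweil_Integration.content K *\<^sub>R (indicator E x :: real))"
          by (rule sum_mono2[OF fin P1p]) (auto simp: split_beta)
        also have "\<dots> < d" using g1d[OF _ pf1] p by simp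
        finally show ?thesis .
      qed
      have "(\<Sum>(x,K)\<in>P1. \<bar>g (Sup K) - g (Inf K)\<bar>) < e/2"
      proof (rule dfam[OF finP1 _ _ c1])
        fix x K assume "(x,K) \<in> P1"
        then show "Inf K < Sup K \<and> K = {Inf K..Sup K} \<and> K \<subseteq> {a..b}"
          using tagged_interval[OF p] unfolding P1_def by blast
      next
        fix x1 K1 x2 K2 assume "(x1,K1) \<in> P1" "(x2,K2) \<in> P1" "(x1,K1) \<noteq> (x2,K2)"
        then show "interior K1 \<inter> interior K2 = {}"
          using tagged_division_ofD(5)[OF p] P1p by blast
      qed
      moreover have "- (\<Sum>(x,K)\<in>P1. \<bar>g (Sup K) - g (Inf K)\<bar>) \<le> (\<Sum>(x,K)\<in>P1. g (Sup K) - g (Inf K))"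
      proof -
        have "(\<Sum>(x,K)\<in>P1. - \<bar>g (Sup K) - g (Inf K)\<bar>) \<le> (\<Sum>(x,K)\<in>P1. g (Sup K) - g (Inf K))"
          by (rule sum_mono) (auto simp: split_beta)
        then show ?thesis by (simp add: sum_negf split_beta)
      qed
      ultimately show ?thesis by linarith
    qed
    show ?thesis using sumeq split P2 P1b by linarith
  qed
  then show ?thesis by (rule field_le_epsilon)
qed



lemma ac_comp:
  fixes z :: "real \<Rightarrow> 'a::real_normed_vector" and L :: "'a \<Rightarrow> real"
  assumes ac: "abs_cont_on S z" and L: "\<And>x y. \<bar>L x - L y\<bar> \<le> norm (x - y)"
  shows "abs_cont_on S (\<lambda>t. L (z t))"
  unfolding abs_cont_on_def
proof (intro allI impI)
  fix e :: real assume e: "e > 0"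
  then obtain d where d: "d > 0" and dd: "\<forall>(n::nat) (a::nat \<Rightarrow> real) b.
        (\<forall>i<n. a i \<le> b i \<and> {a i..b i} \<subseteq> S) \<and>
        (\<forall>i<n. \<forall>j<n. i \<noteq> j \<longrightarrow> b i \<le> a j \<or> b j \<le> a i) \<and>
        (\<Sum>i<n. b i - a i) < d
        \<longrightarrow> (\<Sum>i<n. norm (z (b i) - z (a i))) < e"
    using ac unfolding abs_cont_on_def by blast
  show "\<exists>d>0. \<forall>(n::nat) (a::nat \<Rightarrow> real) b.
        (\<forall>i<n. a i \<le> b i \<and> {a i..b i} \<subseteq> S) \<and>
        (\<forall>i<n. \<forall>j<n. i \<noteq> j \<longrightarrow> b i \<le> a j \<or> b j \<le> a i) \<and>
        (\<Sum>i<n. b i - a i) < d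
        \<longrightarrow> (\<Sum>i<n. norm (L (z (b i)) - L (z (a i)))) < e"
  proof (intro exI[of _ d] conjI allI impI d)
    fix n :: nat and a b :: "nat \<Rightarrow> real"
    assume H: "(\<forall>i<n. a i \<le> b i \<and> {a i..b i} \<subseteq> S) \<and>
        (\<forall>i<n. \<forall>j<n. i \<noteq> j \<longrightarrow> b i \<le> a j \<or> b j \<le> a i) \<and>
        (\<Sum>i<n. b i - a i) < d"
    have "(\<Sum>i<n. norm (L (z (b i)) - L (z (a i)))) \<le> (\<Sum>i<n. norm (z (b i) - z (a i)))"
      by (rule sum_mono) (use L in simp)
    also have "\<dots> < e" using dd H by blast
    finally show "(\<Sum>i<n. norm (L (z (b i)) - L (z (a i)))) < e" .
  qed
qed

lemma ac_sub_lin: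
  fixes f :: "real \<Rightarrow> real"
  assumes ac: "abs_cont_on S f"
  shows "abs_cont_on S (\<lambda>t. f t - c * t)"
  unfolding abs_cont_on_def
proof (intro allI impI)
  fix e :: real assume e: "e > 0"
  from ac[unfolded abs_cont_on_def, rule_format, OF half_gt_zero[OF e]]
  obtain d where d: "d > 0" and dd: "\<forall>(n::nat) (a::nat \<Rightarrow> real) b.
        (\<forall>i<n. a i \<le> b i \<and> {a i..b i} \<subseteq> S) \<and>
        (\<forall>i<n. \<forall>j<n. i \<noteq> j \<longrightarrow> b i \<le> a j \<or> b j \<le> a i) \<and>
        (\<Sum>i<n. b i - a i) < d
        \<longrightarrow> (\<Sum>i<n. norm (f (b i) - f (a i))) < e / 2"
    by blast
  define d' where "d' = min d (e / (2 * (\<bar>c\<bar> + 1)))"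
  have d'0: "d' > 0" using d e by (simp add: d'_def)
  show "\<exists>d>0. \<forall>(n::nat) (a::nat \<Rightarrow> real) b.
        (\<forall>i<n. a i \<le> b i \<and> {a i..b i} \<subseteq> S) \<and>
        (\<forall>i<n. \<forall>j<n. i \<noteq> j \<longrightarrow> b i \<le> a j \<or> b j \<le> a i) \<and>
        (\<Sum>i<n. b i - a i) < d
        \<longrightarrow> (\<Sum>i<n. norm ((f (b i) - c * b i) - (f (a i) - c * a i))) < e"
  proof (intro exI[of _ d'] conjI allI impI d'0)
    fix n :: nat and a b :: "nat \<Rightarrow> real"
    assume H: "(\<forall>i<n. a i \<le> b i \<and> {a i..b i} \<subseteq> S) \<and>
        (\<forall>i<n. \<forall>j<n. i \<noteq> j \<longrightarrow> b i \<le> a j \<or> b j \<le> a i) \<and>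
        (\<Sum>i<n. b i - a i) < d'"
    have s1: "(\<Sum>i<n. b i - a i) < d" using H d'_def by linarith
    have s2: "(\<Sum>i<n. b i - a i) \<le> e / (2 * (\<bar>c\<bar> + 1))" using H d'_def by linarith
    have "(\<Sum>i<n. norm ((f (b i) - c * b i) - (f (a i) - c * a i))) \<le>
          (\<Sum>i<n. norm (f (b i) - f (a i)) + \<bar>c\<bar> * (b i - a i))"
    proof (rule sum_mono)
      fix i assume "i \<in> {..<n}"
      then have "a i \<le> b i" using H by auto
      then have "\<bar>c * b i - c * a i\<bar> = \<bar>c\<bar> * (b i - a i)"
        by (simp add: abs_mult right_diff_distrib[symmetric])
      then show "norm ((f (b i) - c * b i) - (f (a i) - c * a i)) \<le> norm (f (b i) - f (a i)) + \<bar>c\<bar> * (b i - a i)"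
        by simp
    qed
    also have "\<dots> = (\<Sum>i<n. norm (f (b i) - f (a i))) + \<bar>c\<bar> * (\<Sum>i<n. b i - a i)"
      by (simp add: sum.distrib sum_distrib_left)
    also have "\<dots> < e"
    proof -
      have "(\<Sum>i<n. norm (f (b i) - f (a i))) < e / 2" using dd H s1 by blast
      moreover have "\<bar>c\<bar> * (\<Sum>i<n. b i - a i) \<le> \<bar>c\<bar> * (e / (2 * (\<bar>c\<bar> + 1)))"
        using s2 by (intro mult_left_mono) auto
      moreover have "\<bar>c\<bar> * (e / (2 * (\<bar>c\<bar> + 1))) \<le> e / 2"
      proof -
        have "\<bar>c\<bar> * (e / (2 * (\<bar>c\<bar> + 1))) = (e/2) * (\<bar>c\<bar> / (\<bar>c\<bar> + 1))" by simp
        also have "\<dots> \<le> (e/2) * 1" using e by (intro mult_left_mono) auto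
        finally show ?thesis by simp
      qed
      ultimately show ?thesis by linarith
    qed
    finally show "(\<Sum>i<n. norm ((f (b i) - c * b i) - (f (a i) - c * a i))) < e" .
  qed
qed

lemma ac_mono_c:
  fixes f :: "real \<Rightarrow> real"
  assumes ab: "a \<le> b" and ac: "abs_cont_on {a..b} f" and E: "negligible E"
    and der: "\<And>t. t \<in> {a..b} \<Longrightarrow> t \<notin> E \<Longrightarrow> \<exists>v\<ge>c. (f has_real_derivative v) (at t)"
  shows "c * (b - a) \<le> f b - f a"
proof -
  have "(\<lambda>t. f t - c * t) a \<le> (\<lambda>t. f t - c * t) b"
  proof (rule ac_mono[OF ab ac_sub_lin[OF ac] E])
    fix t assume "t \<in> {a..b}" "t \<notin> E"
    then obtain v where v: "v \<ge> c" "(f has_real_derivative v) (at t)" using der by blast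
    have "((\<lambda>t. f t - c * t) has_real_derivative (v - c)) (at t)"
      using v(2) by (auto intro!: derivative_eq_intros)
    then show "\<exists>v\<ge>0. ((\<lambda>t. f t - c * t) has_real_derivative v) (at t)" using v(1)
      by (intro exI[of _ "v - c"]) auto
  qed
  then show ?thesis by (simp add: algebra_simps)
qed



lemma hs_fst: "convex {w::real\<times>real. fst w \<le> M}" "closed {w::real\<times>real. fst w \<le> M}"
proof -
  show "convex {w::real\<times>real. fst w \<le> M}"
    unfolding convex_def
  proof (intro ballI allI impI)
    fix x y :: "real \<times> real" and u v :: real
    assume x: "x \<in> {w. fst w \<le> M}" and y: "y \<in> {w. fst w \<le> M}" and uv: "0 \<le> u" "0 \<le> v" "u + v = 1"
    have "u * fst x \<le> u * M" using x uv by (intro mult_left_mono) auto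
    moreover have "v * fst y \<le> v * M" using y uv by (intro mult_left_mono) auto
    ultimately have "u * fst x + v * fst y \<le> (u + v) * M" by (simp add: algebra_simps)
    then show "u *\<^sub>R x + v *\<^sub>R y \<in> {w. fst w \<le> M}" using uv by simp
  qed
  show "closed {w::real\<times>real. fst w \<le> M}"
    by (intro closed_Collect_le continuous_intros)
qed

lemma hs_snd: "convex {w::real\<times>real. M \<le> snd w}" "closed {w::real\<times>real. M \<le> snd w}"
proof -
  show "convex {w::real\<times>real. M \<le> snd w}"
    unfolding convex_def
  proof (intro ballI allI impI)
    fix x y :: "real \<times> real" and u v :: real
    assume x: "x \<in> {w. M \<le> snd w}" and y: "y \<in> {w. M \<le> snd w}" and uv: "0 \<le> u" "0 \<le> v" "u + v = 1"
    have "u * M \<le> u * snd x" using x uv by (intro mult_left_mono) auto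
    moreover have "v * M \<le> v * snd y" using y uv by (intro mult_left_mono) auto
    ultimately have "(u + v) * M \<le> u * snd x + v * snd y" by (simp add: algebra_simps)
    then show "u *\<^sub>R x + v *\<^sub>R y \<in> {w. M \<le> snd w}" using uv by simp
  qed
  show "closed {w::real\<times>real. M \<le> snd w}"
    by (intro closed_Collect_le continuous_intros)
qed

lemma filippov_in:
  fixes F :: "real \<times> real \<Rightarrow> real \<times> real"
  assumes v: "v \<in> filippov_set F p" and d: "d > 0"
    and H: "convex H" "closed H" and sub: "\<And>q. dist q p < d \<Longrightarrow> F q \<in> H"
  shows "v \<in> H"
proof -
  have "v \<in> closure (convex hull (F ` (ball p d - {})))"
    using v d unfolding filippov_set_def by blast
  moreover have "F ` (ball p d - {}) \<subseteq> H" using sub by (auto simp: dist_commute)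
  then have "convex hull (F ` (ball p d - {})) \<subseteq> H" using H(1) by (rule hull_minimal)
  then have "closure (convex hull (F ` (ball p d - {}))) \<subseteq> H" using H(2) by (rule closure_minimal)
  ultimately show ?thesis by blast
qed

lemma filippov_fst:
  assumes v: "v \<in> filippov_set (field \<delta> \<rho> \<eta>c) p" and \<delta>: "\<delta> > 0"
  shows "fst v \<le> \<delta> * (snd p - \<eta>c)"
proof (rule field_le_epsilon)
  fix e :: real assume e: "e > 0"
  have "v \<in> {w. fst w \<le> \<delta> * (snd p - \<eta>c) + e}"
  proof (rule filippov_in[OF v _ hs_fst])
    show "e / \<delta> > 0" using e \<delta> by simp
  next
    fix q :: "real \<times> real" assume q: "dist q p < e / \<delta>"
    have "dist (snd q) (snd p) < e / \<delta>" using dist_snd_le[of q p] q by linarith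
    then have "snd q - snd p \<le> e / \<delta>" by (simp add: dist_real_def)
    then have "\<delta> * (snd q - snd p) \<le> \<delta> * (e / \<delta>)" using \<delta> by (intro mult_left_mono) auto
    then have "\<delta> * (snd q - \<eta>c) \<le> \<delta> * (snd p - \<eta>c) + e" using \<delta> by (simp add: algebra_simps)
    then show "field \<delta> \<rho> \<eta>c q \<in> {w. fst w \<le> \<delta> * (snd p - \<eta>c) + e}"
      by (simp add: field_def g_fun_def)
  qed
  then show "fst v \<le> \<delta> * (snd p - \<eta>c) + e" by simp
qed

lemma eta_dot_ge: "\<eta> < 1 \<Longrightarrow> h_fun \<rho> A \<eta> \<le> eta_dot \<rho> A \<eta>"
  unfolding eta_dot_def Let_def by auto

lemma h_cont: "isCont (\<lambda>q::real\<times>real. h_fun \<rho> (fst q) (snd q)) p"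
  unfolding h_fun_def by (intro continuous_intros) simp_all

lemma filippov_snd:
  assumes v: "v \<in> filippov_set (field \<delta> \<rho> \<eta>c) p" and p1: "snd p < 1"
  shows "h_fun \<rho> (fst p) (snd p) \<le> snd v"
proof (rule field_le_epsilon)
  fix e :: real assume e: "e > 0"
  have "((\<lambda>q::real\<times>real. h_fun \<rho> (fst q) (snd q)) \<longlongrightarrow> h_fun \<rho> (fst p) (snd p)) (at p)"
    using h_cont[where \<rho>=\<rho> and p=p] by (simp add: isCont_def)
  from metric_LIM_D[OF this e] obtain s where s: "s > 0"
    and ss: "\<And>q. q \<noteq> p \<and> dist q p < s \<Longrightarrow> dist (h_fun \<rho> (fst q) (snd q)) (h_fun \<rho> (fst p) (snd p)) < e"
    by blast
  have "v \<in> {w. h_fun \<rho> (fst p) (snd p) - e \<le> snd w}"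
  proof (rule filippov_in[OF v _ hs_snd])
    show "min s (1 - snd p) > 0" using s p1 by simp
  next
    fix q :: "real \<times> real" assume q: "dist q p < min s (1 - snd p)"
    have "dist (snd q) (snd p) < 1 - snd p" using dist_snd_le[of q p] q by linarith
    then have q1: "snd q < 1" by (simp add: dist_real_def abs_less_iff)
    have "h_fun \<rho> (fst p) (snd p) - e \<le> h_fun \<rho> (fst q) (snd q)"
    proof (cases "q = p")
      case True then show ?thesis using e by simp
    next
      case False
      then have "dist (h_fun \<rho> (fst q) (snd q)) (h_fun \<rho> (fst p) (snd p)) < e" using ss q by simp
      then show ?thesis by (simp add: dist_real_def abs_less_iff)
    qed
    also have "\<dots> \<le> eta_dot \<rho> (fst q) (snd q)" using q1 by (rule eta_dot_ge)
    finally show "field \<delta> \<rho> \<eta>c q \<in> {w. h_fun \<rho> (fst p) (snd p) - e \<le> snd w}"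
      by (simp add: field_def)
  qed
  then show "h_fun \<rho> (fst p) (snd p) \<le> snd v + e" by simp
qed



lemma poly_bound:
  fixes \<eta> :: real
  assumes "\<eta> \<le> 0"
  shows "-600 \<le> 112.88 + 56.91 * \<eta> - 24.31 * \<eta>^2 - 11.05 * \<eta>^3"
proof -
  define x where "x = - \<eta>"
  have x0: "x \<ge> 0" using assms by (simp add: x_def)
  have eq: "112.88 + 56.91 * \<eta> - 24.31 * \<eta>^2 - 11.05 * \<eta>^3 = 112.88 - 56.91 * x - 24.31 * (x*x) + 11.05 * (x * (x*x))"
    by (simp add: x_def power2_eq_square power3_eq_cube)
  show ?thesis
  proof (cases "x \<le> 4")
    case True
    have "x * x \<le> 4 * 4" using True x0 by (intro mult_mono) auto
    moreover have "x * (x * x) \<ge> 0" using x0 by simp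
    ultimately show ?thesis unfolding eq using True x0 by (simp; linarith)
  next
    case False
    have xx: "x * x \<ge> 4 * x" using False x0 by (intro mult_right_mono) auto
    have "x * (x * x) \<ge> 4 * (x * x)" using False x0 by (intro mult_right_mono) auto
    then show ?thesis unfolding eq using xx x0 by (simp; linarith)
  qed
qed

lemma comp_deriv:
  fixes z :: "real \<Rightarrow> real \<times> real"
  assumes H: "(z has_vector_derivative v) (at t)"
  shows "((\<lambda>t. fst (z t)) has_real_derivative fst v) (at t)"
    and "((\<lambda>t. snd (z t)) has_real_derivative snd v) (at t)"
proof -
  have "((\<lambda>x. fst (z x)) has_derivative (\<lambda>x. fst (x *\<^sub>R v))) (at t)"
    using has_derivative_fst[OF H[unfolded has_vector_derivative_def]] .
  then have "((\<lambda>x. fst (z x)) has_vector_derivative fst v) (at t)"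
    by (simp add: has_vector_derivative_def)
  then show "((\<lambda>t. fst (z t)) has_real_derivative fst v) (at t)"
    by (simp add: has_real_derivative_iff_has_vector_derivative)
  have "((\<lambda>x. snd (z x)) has_derivative (\<lambda>x. snd (x *\<^sub>R v))) (at t)"
    using has_derivative_snd[OF H[unfolded has_vector_derivative_def]] .
  then have "((\<lambda>x. snd (z x)) has_vector_derivative snd v) (at t)"
    by (simp add: has_vector_derivative_def)
  then show "((\<lambda>t. snd (z t)) has_real_derivative snd v) (at t)"
    by (simp add: has_real_derivative_iff_has_vector_derivative)
qed

theorem theorem3p3:
  fixes \<delta> \<rho> \<eta>c t0 :: real and I :: "real set" and z :: "real \<Rightarrow> real \<times> real"
  assumes "\<delta> > 0" and "\<rho> > 0" and "\<eta>c > 0"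
    and "is_interval I" and "{t0..} \<subseteq> I"
    and "filippov_solution (field \<delta> \<rho> \<eta>c) I z"
    and "snd (z t0) = 0"
  shows "\<exists>t1>t0. snd (z t1) > 0"
proof (rule ccontr)
  assume contra: "\<not> ?thesis"
  have neg: "\<And>t. t \<ge> t0 \<Longrightarrow> snd (z t) \<le> 0"
    using contra assms(7) by (metis linorder_not_le order_le_less)
  have acz: "\<And>a b. {a..b} \<subseteq> I \<Longrightarrow> abs_cont_on {a..b} z"
    using assms(6) unfolding filippov_solution_def by blast
  have ae: "AE t in lebesgue. t \<in> I \<longrightarrow>
        (\<exists>v. (z has_vector_derivative v) (at t) \<and> v \<in> filippov_set (field \<delta> \<rho> \<eta>c) (z t))"
    using assms(6) unfolding filippov_solution_def by blast
  then obtain N where N1: "{t \<in> space lebesgue. \<not> (t \<in> I \<longrightarrow>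
        (\<exists>v. (z has_vector_derivative v) (at t) \<and> v \<in> filippov_set (field \<delta> \<rho> \<eta>c) (z t)))} \<subseteq> N"
    and N2: "emeasure lebesgue N = 0" and N3: "N \<in> sets lebesgue"
    by (rule AE_E)
  have negN: "negligible N" unfolding negligible_iff_null_sets using N2 N3 by (simp add: null_sets_def)
  have good: "\<And>t. t \<ge> t0 \<Longrightarrow> t \<notin> N \<Longrightarrow>
      \<exists>v. (z has_vector_derivative v) (at t) \<and> v \<in> filippov_set (field \<delta> \<rho> \<eta>c) (z t)"
    using N1 assms(5) by auto
  have ac: "abs_cont_on {a..b} z" if "t0 \<le> a" for a b
  proof (rule acz)
    show "{a..b} \<subseteq> I" using that assms(5) by auto
  qed
  have acfst: "\<And>a b. t0 \<le> a \<Longrightarrow> abs_cont_on {a..b} (\<lambda>t. - fst (z t))"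
  proof -
    fix a b assume "t0 \<le> a"
    show "abs_cont_on {a..b} (\<lambda>t. - fst (z t))"
    proof (rule ac_comp[OF ac[OF \<open>t0 \<le> a\<close>], where L = "\<lambda>p. - fst p"])
      fix x y :: "real \<times> real"
      show "\<bar>- fst x - - fst y\<bar> \<le> norm (x - y)"
        using dist_fst_le[of x y] by (simp add: dist_norm dist_real_def abs_minus_commute)
    qed
  qed
  have acsnd: "\<And>a b. t0 \<le> a \<Longrightarrow> abs_cont_on {a..b} (\<lambda>t. snd (z t))"
  proof -
    fix a b assume "t0 \<le> a"
    show "abs_cont_on {a..b} (\<lambda>t. snd (z t))"
    proof (rule ac_comp[OF ac[OF \<open>t0 \<le> a\<close>], where L = "\<lambda>p. snd p"])
      fix x y :: "real \<times> real"
      show "\<bar>snd x - snd y\<bar> \<le> norm (x - y)"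
        using dist_snd_le[of x y] by (simp add: dist_norm dist_real_def)
    qed
  qed
  have stepA: "\<And>t. t \<ge> t0 \<Longrightarrow> fst (z t) \<le> fst (z t0) - \<delta> * \<eta>c * (t - t0)"
  proof -
    fix t assume t: "t \<ge> t0"
    have "\<delta> * \<eta>c * (t - t0) \<le> (- fst (z t)) - (- fst (z t0))"
    proof (rule ac_mono_c[OF t acfst[OF order_refl] negN])
      fix \<tau> assume \<tau>: "\<tau> \<in> {t0..t}" "\<tau> \<notin> N"
      then have "\<exists>v. (z has_vector_derivative v) (at \<tau>) \<and> v \<in> filippov_set (field \<delta> \<rho> \<eta>c) (z \<tau>)"
        using good[of \<tau>] by simp
      then obtain v where v: "(z has_vector_derivative v) (at \<tau>)" "v \<in> filippov_set (field \<delta> \<rho> \<eta>c) (z \<tau>)"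
        by blast
      have d: "((\<lambda>t. - fst (z t)) has_real_derivative - fst v) (at \<tau>)"
        using comp_deriv(1)[OF v(1)] by (rule DERIV_minus)
      have "fst v \<le> \<delta> * (snd (z \<tau>) - \<eta>c)" by (rule filippov_fst[OF v(2) assms(1)])
      moreover have "\<delta> * snd (z \<tau>) \<le> 0" using neg[of \<tau>] \<tau> assms(1) by (simp add: mult_nonneg_nonpos)
      ultimately have "\<delta> * \<eta>c \<le> - fst v" by (simp add: algebra_simps)
      then show "\<exists>v\<ge>\<delta> * \<eta>c. ((\<lambda>t. - fst (z t)) has_real_derivative v) (at \<tau>)" using d by blast
    qed
    then show "fst (z t) \<le> fst (z t0) - \<delta> * \<eta>c * (t - t0)" by simp
  qed
  define T where "T = t0 + \<bar>fst (z t0) + 902\<bar> / (\<delta> * \<eta>c)"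
  have dpos: "\<delta> * \<eta>c > 0" using assms(1,3) by simp
  have T0: "T \<ge> t0" unfolding T_def using dpos by simp
  have Abound: "\<And>t. t \<ge> T \<Longrightarrow> fst (z t) \<le> -902"
  proof -
    fix t assume t: "t \<ge> T"
    have "\<delta> * \<eta>c * (t - t0) \<ge> \<delta> * \<eta>c * (T - t0)" using t dpos by (intro mult_left_mono) auto
    moreover have "\<delta> * \<eta>c * (T - t0) = \<bar>fst (z t0) + 902\<bar>" unfolding T_def using assms(1,3) by simp
    moreover have "fst (z t) \<le> fst (z t0) - \<delta> * \<eta>c * (t - t0)" using stepA t T0 by simp
    ultimately show "fst (z t) \<le> -902" by linarith
  qed
  have hbound: "\<And>t. t \<ge> T \<Longrightarrow> \<rho> \<le> h_fun \<rho> (fst (z t)) (snd (z t))"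
  proof -
    fix t assume t: "t \<ge> T"
    have pb: "-600 \<le> 112.88 + 56.91 * snd (z t) - 24.31 * (snd (z t))^2 - 11.05 * (snd (z t))^3"
      using poly_bound neg t T0 by simp
    have fb: "fst (z t) \<le> -902" using Abound t by simp
    have key: "\<And>(P::real) A. -600 \<le> P \<Longrightarrow> A \<le> -902 \<Longrightarrow> 1 \<le> P - A / 1.5"
      by (simp add: field_simps; linarith)
    have "1 \<le> 112.88 + 56.91 * snd (z t) - 24.31 * (snd (z t))^2 - 11.05 * (snd (z t))^3 - fst (z t) / 1.5"
      by (rule key[OF pb fb])
    then have "\<rho> * 1 \<le> \<rho> * (112.88 + 56.91 * snd (z t) - 24.31 * (snd (z t))^2 - 11.05 * (snd (z t))^3 - fst (z t) / 1.5)"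
      using assms(2) by (intro mult_left_mono) auto
    then show "\<rho> \<le> h_fun \<rho> (fst (z t)) (snd (z t))" by (simp add: h_fun_def)
  qed
  define b where "b = T + (1 - snd (z T)) / \<rho>"
  have nT: "snd (z T) \<le> 0" using neg T0 by simp
  have Tb: "T \<le> b" unfolding b_def using nT assms(2) by simp
  have "\<rho> * (b - T) \<le> snd (z b) - snd (z T)"
  proof (rule ac_mono_c[OF Tb acsnd[OF T0] negN])
    fix \<tau> assume \<tau>: "\<tau> \<in> {T..b}" "\<tau> \<notin> N"
    then have \<tau>0: "\<tau> \<ge> t0" using T0 by simp
    then have "\<exists>v. (z has_vector_derivative v) (at \<tau>) \<and> v \<in> filippov_set (field \<delta> \<rho> \<eta>c) (z \<tau>)"
      using good[of \<tau>] \<tau> by simp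
    then obtain v where v: "(z has_vector_derivative v) (at \<tau>)" "v \<in> filippov_set (field \<delta> \<rho> \<eta>c) (z \<tau>)"
      by blast
    have "snd (z \<tau>) < 1" using neg[OF \<tau>0] by simp
    then have "h_fun \<rho> (fst (z \<tau>)) (snd (z \<tau>)) \<le> snd v" by (rule filippov_snd[OF v(2)])
    moreover have "\<rho> \<le> h_fun \<rho> (fst (z \<tau>)) (snd (z \<tau>))" using hbound \<tau> by simp
    ultimately show "\<exists>v\<ge>\<rho>. ((\<lambda>t. snd (z t)) has_real_derivative v) (at \<tau>)"
      using comp_deriv(2)[OF v(1)] by (intro exI[of _ "snd v"]) auto
  qed
  moreover have "\<rho> * (b - T) = 1 - snd (z T)" unfolding b_def using assms(2) by simp
  ultimately have "snd (z b) \<ge> 1" by linarith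
  moreover have "snd (z b) \<le> 0" using neg Tb T0 by simp
  ultimately show False by simp
qed

end
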